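(* Let $f:\mathbb{N}\to\mathbb{R}$ with $f(1)=1$, and suppose $|f|$ is submultiplicative, i.e. $|f(m)|\,|f(n)| \geq |f(mn)|$ for all $m,n\in\mathbb{N}$. Assume there exist $C>0$ and $\gamma\in\mathbb{R}$ such that $|f(n)| \leq C n^\gamma$ for all $n \geq 2$. Then $$|f^{-1}(n)| \leq H(n)\, C^{\Omega(n)} n^{\gamma} \leq C^{\Omega(n)} n^{\gamma+\rho}, \quad n\geq 2,$$ where $\rho=1.72865\dots$ is the unique root $s>1$ of $\zeta(s)=2$.
   Context: The Dirichlet convolution is $(f\ast g)(n)=\sum_{d\mid n} f(n/d)g(d)$; for $f(1)\neq0$, $f^{-1}$ denotes the Dirichlet inverse, the unique arithmetic function with $f\ast f^{-1}=f^{-1}\ast f=\varepsilon$, where $\varepsilon(1)=1$ and $\varepsilon(n)=0$ for $n\ge2$. $\Omega(n)$ is the number of prime factors of $n$ counted with multiplicity. $H(n)$ is the number of ordered factorizations of $n$ into factors $\ge 2$, i.e. $H(n)=\sum_{k\ge1}\#\{(d_1,\dots,d_k): d_1\cdots d_k=n,\ d_i\ge2\}$. $\zeta$ is the Riemann zeta function. *)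

theory Defs
  imports Complex_Main "HOL-Computational_Algebra.Primes"
begin

text \<open>Values at 0 are irrelevant (set to 0).\<close>
function dirichlet_inverse :: "(nat \<Rightarrow> real) \<Rightarrow> nat \<Rightarrow> real" where
  "dirichlet_inverse f n =
     (if n = 0 then 0
      else if n = 1 then 1 / f 1
      else - (\<Sum>d\<in>{d. d dvd n \<and> d < n}. f (n div d) * dirichlet_inverse f d) / f 1)"
  by auto
termination
  by (relation "measure snd") auto

declare dirichlet_inverse.simps [simp del]

definition dirichlet_conv :: "(nat \<Rightarrow> real) \<Rightarrow> (nat \<Rightarrow> real) \<Rightarrow> nat \<Rightarrow> real" where
  "dirichlet_conv f g n = (\<Sum>d\<in>{d. d dvd n}. f (n div d) * g d)"

definition bigOmega :: "nat \<Rightarrow> nat" where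
  "bigOmega n = size (prime_factorization n)"

definition ord_factorizations :: "nat \<Rightarrow> nat" where
  "ord_factorizations n =
     card {ds :: nat list. ds \<noteq> [] \<and> (\<forall>d\<in>set ds. 2 \<le> d) \<and> prod_list ds = n}"

definition zeta_real :: "real \<Rightarrow> real" where
  "zeta_real s = (\<Sum>n. 1 / (real (Suc n)) powr s)"

definition zeta_rho :: real where
  "zeta_rho = (THE s. s > 1 \<and> zeta_real s = 2)"

end

theory Submission
  imports Defs "HOL-Analysis.Analysis"
begin


lemma zeta_summable:
  assumes "s > 1" shows "summable (\<lambda>n. 1 / real (Suc n) powr s)"
proof -
  have "summable (\<lambda>n. real n powr (-s))" using assms summable_real_powr_iff by simp
  hence "summable (\<lambda>n. real (Suc n) powr (-s))"
    using summable_Suc_iff[of "\<lambda>n. real n powr (-s)"] by simp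
  thus ?thesis by (simp add: powr_minus_divide)
qed

lemma zeta_strict_decr:
  assumes "1 < s" "s < t" shows "zeta_real t < zeta_real s"
proof -
  let ?g = "\<lambda>n. 1 / real (Suc n) powr s - 1 / real (Suc n) powr t"
  have sg: "summable ?g" using zeta_summable assms by (intro summable_diff) auto
  have "0 < suminf ?g"
  proof (rule suminf_pos2[OF sg, of 1])
    fix n
    have "real (Suc n) powr s \<le> real (Suc n) powr t" using assms by (intro powr_mono) auto
    thus "0 \<le> ?g n" by (simp add: frac_le)
  next
    have "(2::real) powr s < 2 powr t" using assms by (intro powr_less_mono) auto
    thus "0 < ?g 1" by (simp add: frac_less2)
  qed
  also have "suminf ?g = zeta_real s - zeta_real t"
    unfolding zeta_real_def using zeta_summable assms by (intro suminf_diff[symmetric]) auto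
  finally show ?thesis by simp
qed

lemma zeta_cont:
  assumes "1 < a" shows "continuous_on {a..b} zeta_real"
proof -
  have ul: "uniform_limit {a..b} (\<lambda>n x. \<Sum>i<n. 1 / real (Suc i) powr x) (\<lambda>x. suminf (\<lambda>i. 1 / real (Suc i) powr x)) sequentially"
  proof (rule Weierstrass_m_test[OF _ zeta_summable[OF assms]])
    fix n x assume "x \<in> {a..b}"
    hence "real (Suc n) powr a \<le> real (Suc n) powr x" by (intro powr_mono) auto
    thus "norm (1 / real (Suc n) powr x) \<le> 1 / real (Suc n) powr a"
      by (simp add: frac_le)
  qed
  have "continuous_on {a..b} (\<lambda>x. suminf (\<lambda>i. 1 / real (Suc i) powr x))"
    by (rule uniform_limit_theorem[OF _ ul]) (auto intro!: always_eventually continuous_intros)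
  thus ?thesis unfolding zeta_real_def[abs_def] .
qed

lemma zeta_2_le: "zeta_real 2 \<le> 2"
proof -
  let ?h = "\<lambda>n. 2 / real (Suc n)"
  have "?h \<longlonglongrightarrow> 0"
    using LIMSEQ_Suc[OF lim_const_over_n[of 2]] by simp
  hence t: "(\<lambda>n. ?h n - ?h (Suc n)) sums (?h 0 - 0)" by (rule telescope_sums')
  have "zeta_real 2 \<le> suminf (\<lambda>n. ?h n - ?h (Suc n))"
    unfolding zeta_real_def
  proof (rule suminf_le)
    fix n
    show "1 / real (Suc n) powr 2 \<le> ?h n - ?h (Suc n)"
      by (simp add: powr_numeral power2_eq_square divide_simps)
  qed (use zeta_summable[of 2] t in \<open>auto simp: sums_iff\<close>)
  also have "\<dots> = 2" using t by (simp add: sums_iff)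
  finally show ?thesis .
qed

lemma zeta_big: "zeta_real (1 + 1/7) > 2"
proof -
  define s :: real where "s = 1 + 1/7"
  have "2 < ln (real 128 + 1) / 2"
  proof -
    have "ln (real 128) = 7 * ln 2" using ln_realpow[of 2 7] by simp
    moreover have "ln (real 128) < ln (real 128 + 1)" by simp
    ultimately show ?thesis using ln2_ge_two_thirds by linarith
  qed
  also have "\<dots> \<le> harm 128 / 2" using harm_ge_ln[of 128] by simp
  also have "harm 128 / 2 = (\<Sum>i<128. 1 / (2 * real (Suc i)))"
    unfolding harm_def sum_divide_distrib One_nat_def sum.atLeast1_atMost_eq
    by (simp add: field_simps)
  also have "\<dots> \<le> (\<Sum>i<128. 1 / real (Suc i) powr s)"
  proof (rule sum_mono)
    fix i assume "i \<in> {..<(128::nat)}"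
    hence i: "real (Suc i) \<le> 2 ^ 7" by simp
    have "real (Suc i) powr (1/7) \<le> (2 ^ 7) powr (1/7)" using i by (intro powr_mono2) auto
    also have "(2 ^ 7 :: real) powr (1/7) = 2" by (simp add: powr_powr[symmetric] powr_realpow[symmetric])
    finally have "real (Suc i) powr (1/7) \<le> 2" .
    moreover have "real (Suc i) powr s = real (Suc i) * real (Suc i) powr (1/7)"
      unfolding s_def powr_add by simp
    ultimately have "real (Suc i) powr s \<le> 2 * real (Suc i)"
      by (metis mult.commute mult_left_mono of_nat_0_le_iff)
    thus "1 / (2 * real (Suc i)) \<le> 1 / real (Suc i) powr s"
      by (intro divide_left_mono) auto
  qed
  also have "\<dots> \<le> zeta_real s" unfolding zeta_real_def
    by (intro sum_le_suminf zeta_summable) (auto simp: s_def)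
  finally show ?thesis by (simp add: s_def)
qed

lemma zeta_root: "\<exists>!s. s > 1 \<and> zeta_real s = 2"
proof -
  have "\<exists>x. 1 + 1/7 \<le> x \<and> x \<le> 2 \<and> zeta_real x = 2"
    by (rule IVT2') (use zeta_2_le zeta_big zeta_cont in \<open>auto intro: less_imp_le\<close>)
  then obtain x where x: "x > 1" "zeta_real x = 2" by force
  show ?thesis
  proof (rule ex1I[of _ x])
    fix y assume y: "y > 1 \<and> zeta_real y = 2"
    show "y = x"
    proof (rule ccontr)
      assume "y \<noteq> x"
      hence "y < x \<or> x < y" by auto
      thus False using zeta_strict_decr[of y x] zeta_strict_decr[of x y] x y by auto
    qed
  qed (use x in auto)
qed



definition FS :: "nat \<Rightarrow> nat list set" where
  "FS n = {ds. (\<forall>d\<in>set ds. 2 \<le> d) \<and> prod_list ds = n}"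

lemma prod_list_ge2: "(\<forall>d\<in>set ds. 2 \<le> d) \<Longrightarrow> ds \<noteq> [] \<Longrightarrow> prod_list ds \<ge> (2::nat)"
proof (induction ds)
  case (Cons a ds)
  show ?case
  proof (cases "ds = []")
    case False
    hence "prod_list ds \<ge> 2" using Cons by auto
    hence "prod_list ds \<ge> 1" by simp
    thus ?thesis using Cons.prems by (simp add: mult_le_mono order_trans[OF _ mult_le_mono[of 2 a 1 "prod_list ds"]])
  qed (use Cons in auto)
qed simp

lemma FS_0: "FS 0 = {}"
  unfolding FS_def by (auto simp: prod_list_zero_iff) (metis not_numeral_le_zero)

lemma FS_1: "FS 1 = {[]}"
  unfolding FS_def using prod_list_ge2 by fastforce

lemma FS_rec:
  assumes "n \<ge> 2"
  shows "FS n = (\<Union>d\<in>{d. d dvd n \<and> d < n}. (#) (n div d) ` FS d)"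
proof (intro equalityI subsetI)
  fix ds assume "ds \<in> FS n"
  hence ds: "\<forall>d\<in>set ds. 2 \<le> d" "prod_list ds = n" by (auto simp: FS_def)
  then obtain a rest where ar: "ds = a # rest" using assms by (cases ds) auto
  let ?d = "prod_list rest"
  have a2: "a \<ge> 2" using ds ar by auto
  have n: "n = a * ?d" using ds ar by simp
  hence d0: "?d > 0" using assms by (cases "?d") auto
  have "?d dvd n" using n by simp
  moreover have "?d < n" using n a2 d0 by simp
  moreover have "n div ?d = a" using n d0 by simp
  moreover have "rest \<in> FS ?d" using ds ar by (auto simp: FS_def)
  ultimately show "ds \<in> (\<Union>d\<in>{d. d dvd n \<and> d < n}. (#) (n div d) ` FS d)"
    using ar by force
next
  fix ds assume "ds \<in> (\<Union>d\<in>{d. d dvd n \<and> d < n}. (#) (n div d) ` FS d)"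
  then obtain d rest where d: "d dvd n" "d < n" "rest \<in> FS d" "ds = (n div d) # rest" by auto
  have d0: "d > 0" using d assms by (cases d) auto
  have "n div d * d = n" using d by simp
  moreover have "n div d \<ge> 2"
  proof (rule ccontr)
    assume "\<not> 2 \<le> n div d"
    hence "n div d \<le> 1" by simp
    hence "n div d * d \<le> d" by simp
    thus False using \<open>n div d * d = n\<close> d by simp
  qed
  ultimately show "ds \<in> FS n" using d by (auto simp: FS_def)
qed

lemma FS_finite: "finite (FS n)"
proof (induction n rule: less_induct)
  case (less n)
  show ?case
  proof (cases "n \<ge> 2")
    case True
    show ?thesis unfolding FS_rec[OF True]
      by (rule finite_UN_I) (use less in \<open>auto intro: finite_subset[of _ "{..<n}"]\<close>)
  next
    case False
    hence "n = 0 \<or> n = 1" by auto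
    thus ?thesis using FS_0 FS_1 by auto
  qed
qed

lemma FS_card_rec:
  assumes "n \<ge> 2"
  shows "card (FS n) = (\<Sum>d\<in>{d. d dvd n \<and> d < n}. card (FS d))"
  unfolding FS_rec[OF assms]
proof (subst card_UN_disjoint)
  show "finite {d. d dvd n \<and> d < n}" by (rule finite_subset[of _ "{..<n}"]) auto
  show "\<forall>i\<in>{d. d dvd n \<and> d < n}. finite ((#) (n div i) ` FS i)" using FS_finite by auto
  show "\<forall>i\<in>{d. d dvd n \<and> d < n}. \<forall>j\<in>{d. d dvd n \<and> d < n}. i \<noteq> j \<longrightarrow>
          (#) (n div i) ` FS i \<inter> (#) (n div j) ` FS j = {}"
    by (auto simp: FS_def)
  show "(\<Sum>i\<in>{d. d dvd n \<and> d < n}. card ((#) (n div i) ` FS i)) = (\<Sum>d\<in>{d. d dvd n \<and> d < n}. card (FS d))"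
    by (intro sum.cong refl card_image) auto
qed

lemma ord_fact_FS: "n \<ge> 2 \<Longrightarrow> ord_factorizations n = card (FS n)"
  unfolding ord_factorizations_def FS_def
  by (rule arg_cong[where f=card]) auto

lemma bigOmega_mult: "a \<noteq> 0 \<Longrightarrow> b \<noteq> 0 \<Longrightarrow> bigOmega (a * b) = bigOmega a + bigOmega b"
  unfolding bigOmega_def by (simp add: prime_factorization_mult)

lemma bigOmega_prime: "prime p \<Longrightarrow> bigOmega p = 1"
  unfolding bigOmega_def by (simp add: prime_factorization_prime)

lemma bigOmega_1: "bigOmega 1 = 0"
  unfolding bigOmega_def by simp

lemma bigOmega_Suc0: "bigOmega (Suc 0) = 0"
  unfolding bigOmega_def by simp

lemma FS_Suc0: "FS (Suc 0) = {[]}"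
  using FS_1 by simp



lemma f_bound:
  fixes f :: "nat \<Rightarrow> real" and C \<gamma> :: real
  assumes f1: "f 1 = 1"
    and submult: "\<And>m n. m \<ge> 1 \<Longrightarrow> n \<ge> 1 \<Longrightarrow> \<bar>f m\<bar> * \<bar>f n\<bar> \<ge> \<bar>f (m * n)\<bar>"
    and Cpos: "C > 0"
    and bound: "\<And>n. n \<ge> 2 \<Longrightarrow> \<bar>f n\<bar> \<le> C * real n powr \<gamma>"
  shows "m \<ge> 1 \<Longrightarrow> \<bar>f m\<bar> \<le> C ^ bigOmega m * real m powr \<gamma>"
proof (induction m rule: less_induct)
  case (less m)
  show ?case
  proof (cases "m = 1")
    case True show ?thesis unfolding True using f1 by (simp add: bigOmega_Suc0 FS_Suc0)
  next
    case False
    hence m2: "m \<ge> 2" using less.prems by simp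
    obtain p where p: "prime p" "p dvd m" using m2 prime_factor_nat[of m] by auto
    then obtain k where k: "m = p * k" by (auto elim: dvdE)
    have p2: "p \<ge> 2" using p prime_ge_2_nat by auto
    have k1: "k \<ge> 1" using k m2 by (cases k) auto
    have km: "k < m" using k p2 k1 by simp
    have "\<bar>f m\<bar> \<le> \<bar>f p\<bar> * \<bar>f k\<bar>" using submult[of p k] k p2 k1 by simp
    also have "\<dots> \<le> (C * real p powr \<gamma>) * (C ^ bigOmega k * real k powr \<gamma>)"
      by (intro mult_mono bound less.IH p2 km k1) (use Cpos in auto)
    also have "\<dots> = C ^ bigOmega m * real m powr \<gamma>"
      using k p2 k1 by (simp add: bigOmega_mult bigOmega_prime[OF p(1)] powr_mult)
    finally show ?thesis .
  qed
qed

lemma finv_bound: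
  fixes f :: "nat \<Rightarrow> real" and C \<gamma> :: real
  assumes f1: "f 1 = 1"
    and fb: "\<And>m. m \<ge> 1 \<Longrightarrow> \<bar>f m\<bar> \<le> C ^ bigOmega m * real m powr \<gamma>"
    and Cpos: "C > 0"
  shows "n \<ge> 1 \<Longrightarrow> \<bar>dirichlet_inverse f n\<bar> \<le> real (card (FS n)) * C ^ bigOmega n * real n powr \<gamma>"
proof (induction n rule: less_induct)
  case (less n)
  show ?case
  proof (cases "n = 1")
    case True show ?thesis unfolding True using f1 by (subst dirichlet_inverse.simps) (simp add: bigOmega_Suc0 FS_Suc0)
  next
    case False
    hence n2: "n \<ge> 2" using less.prems by simp
    let ?S = "{d. d dvd n \<and> d < n}"
    have "\<bar>dirichlet_inverse f n\<bar> = \<bar>\<Sum>d\<in>?S. f (n div d) * dirichlet_inverse f d\<bar>"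
      using n2 f1 by (simp add: dirichlet_inverse.simps[of f n])
    also have "\<dots> \<le> (\<Sum>d\<in>?S. \<bar>f (n div d)\<bar> * \<bar>dirichlet_inverse f d\<bar>)"
      by (rule order_trans[OF sum_abs]) (simp add: abs_mult)
    also have "\<dots> \<le> (\<Sum>d\<in>?S. (C ^ bigOmega (n div d) * real (n div d) powr \<gamma>) *
                     (real (card (FS d)) * C ^ bigOmega d * real d powr \<gamma>))"
    proof (rule sum_mono)
      fix d assume d: "d \<in> ?S"
      have d0: "d \<ge> 1" using d n2 by (cases d) auto
      have "n div d > 0" using d d0 by (subst div_greater_zero_iff) auto
      hence "n div d \<ge> 1" by simp
      thus "\<bar>f (n div d)\<bar> * \<bar>dirichlet_inverse f d\<bar> \<le> (C ^ bigOmega (n div d) * real (n div d) powr \<gamma>) *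
                     (real (card (FS d)) * C ^ bigOmega d * real d powr \<gamma>)"
        using d d0 Cpos by (intro mult_mono fb less.IH) auto
    qed
    also have "\<dots> = (\<Sum>d\<in>?S. real (card (FS d)) * C ^ bigOmega n * real n powr \<gamma>)"
    proof (rule sum.cong[OF refl])
      fix d assume d: "d \<in> ?S"
      have d0: "d \<ge> 1" using d n2 by (cases d) auto
      have e: "n = (n div d) * d" using d by simp
      have e0: "n div d \<noteq> 0" using e n2 by (metis mult_0 not_numeral_le_zero) 
      have "C ^ bigOmega n = C ^ bigOmega (n div d) * C ^ bigOmega d"
        by (subst e) (use e0 d0 in \<open>simp add: bigOmega_mult power_add\<close>)
      moreover have "real n powr \<gamma> = real (n div d) powr \<gamma> * real d powr \<gamma>"
        by (subst e) (simp add: powr_mult)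
      ultimately show "(C ^ bigOmega (n div d) * real (n div d) powr \<gamma>) *
                     (real (card (FS d)) * C ^ bigOmega d * real d powr \<gamma>) =
                     real (card (FS d)) * C ^ bigOmega n * real n powr \<gamma>"
        by (simp add: algebra_simps)
    qed
    also have "\<dots> = real (card (FS n)) * C ^ bigOmega n * real n powr \<gamma>"
      unfolding FS_card_rec[OF n2] by (simp add: sum_distrib_right)
    finally show ?thesis .
  qed
qed



lemma H_bound:
  assumes r1: "r > 1" and z2: "zeta_real r = 2"
  shows "n \<ge> 1 \<Longrightarrow> real (card (FS n)) \<le> real n powr r"
proof (induction n rule: less_induct)
  case (less n)
  show ?case
  proof (cases "n = 1")
    case True show ?thesis unfolding True by (simp add: FS_Suc0)
  next
    case False
    hence n2: "n \<ge> 2" using less.prems by simp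
    let ?S = "{d. d dvd n \<and> d < n}"
    let ?g = "\<lambda>k. 1 / real (Suc k) powr r"
    have finS: "finite ?S" by (rule finite_subset[of _ "{..<n}"]) auto
    have "real (card (FS n)) = (\<Sum>d\<in>?S. real (card (FS d)))"
      unfolding FS_card_rec[OF n2] by simp
    also have "\<dots> \<le> (\<Sum>d\<in>?S. real n powr r * ?g (n div d - 1))"
    proof (rule sum_mono)
      fix d assume d: "d \<in> ?S"
      have d0: "d \<ge> 1" using d n2 by (cases d) auto
      have "n div d > 0" using d d0 by (subst div_greater_zero_iff) auto
      hence "real (Suc (n div d - 1)) = real (n div d)" by simp
      moreover have "real n = real (n div d) * real d" using d
        by (metis dvd_div_mult_self of_nat_mult mem_Collect_eq)
      ultimately have "real n powr r * ?g (n div d - 1) = real d powr r"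
        using \<open>n div d > 0\<close> by (simp add: powr_mult)
      moreover have "real (card (FS d)) \<le> real d powr r" using less.IH d d0 by auto
      ultimately show "real (card (FS d)) \<le> real n powr r * ?g (n div d - 1)" by simp
    qed
    also have "\<dots> = real n powr r * (\<Sum>d\<in>?S. ?g (n div d - 1))"
      by (simp add: sum_distrib_left)
    also have "(\<Sum>d\<in>?S. ?g (n div d - 1)) = (\<Sum>k\<in>(\<lambda>d. n div d - 1) ` ?S. ?g k)"
    proof -
     have "inj_on (\<lambda>d. n div d - 1) ?S"
     proof (rule inj_onI)
      fix x y assume x: "x \<in> ?S" and y: "y \<in> ?S" and e: "n div x - 1 = n div y - 1"
      have "n div x > 0" "n div y > 0" using x y by (auto simp: div_greater_zero_iff intro: Nat.gr0I)
      hence "n div x = n div y" using e by simp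
      thus "x = y" using x y n2
        by (metis dvd_mult_div_cancel mem_Collect_eq nat_mult_eq_cancel1 div_greater_zero_iff \<open>n div x > 0\<close> mult.commute)
     qed
     thus ?thesis by (simp add: sum.reindex)
    qed
    also have "\<dots> \<le> (\<Sum>k\<in>{1..<n}. ?g k)"
    proof (rule sum_mono2)
      show "(\<lambda>d. n div d - 1) ` ?S \<subseteq> {1..<n}"
      proof
        fix k assume "k \<in> (\<lambda>d. n div d - 1) ` ?S"
        then obtain d where d: "d dvd n" "d < n" "k = n div d - 1" by auto
        have d0: "d > 0" using d n2 by (cases d) auto
        have "n div d \<ge> 2"
        proof (rule ccontr)
          assume "\<not> 2 \<le> n div d"
          hence "n div d * d \<le> d" by simp
          thus False using d by simp
        qed
        moreover have "n div d \<le> n" by simp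
        ultimately have "1 \<le> k" "k < n" using d(3) by linarith+
        thus "k \<in> {1..<n}" by simp
      qed
    qed auto
    also have "\<dots> = (\<Sum>k<n. ?g k) - 1"
    proof -
      have "{..<n} = insert 0 {1..<n}" using n2 by auto
      thus ?thesis by simp
    qed
    also have "\<dots> \<le> zeta_real r - 1"
      unfolding zeta_real_def using zeta_summable[OF r1] by (simp add: sum_le_suminf)
    also have "\<dots> = 1" using z2 by simp
    finally show ?thesis by (simp add: mult_left_mono)
  qed
qed


theorem proposition3p1:
  fixes f :: "nat \<Rightarrow> real" and C \<gamma> :: real
  assumes f1: "f 1 = 1"
    and submult: "\<And>m n. m \<ge> 1 \<Longrightarrow> n \<ge> 1 \<Longrightarrow> \<bar>f m\<bar> * \<bar>f n\<bar> \<ge> \<bar>f (m * n)\<bar>"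
    and Cpos: "C > 0"
    and bound: "\<And>n. n \<ge> 2 \<Longrightarrow> \<bar>f n\<bar> \<le> C * real n powr \<gamma>"
  shows "(\<exists>!s. s > 1 \<and> zeta_real s = 2) \<and>
         (\<forall>n\<ge>2. \<bar>dirichlet_inverse f n\<bar>
                   \<le> real (ord_factorizations n) * C ^ bigOmega n * real n powr \<gamma>
               \<and> real (ord_factorizations n) * C ^ bigOmega n * real n powr \<gamma>
                   \<le> C ^ bigOmega n * real n powr (\<gamma> + zeta_rho))"
proof (intro conjI allI impI zeta_root)
  have rho: "zeta_rho > 1 \<and> zeta_real zeta_rho = 2"
    unfolding zeta_rho_def by (rule theI'[OF zeta_root])
  have fb: "\<And>m. m \<ge> 1 \<Longrightarrow> \<bar>f m\<bar> \<le> C ^ bigOmega m * real m powr \<gamma>"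
    using f_bound[OF f1 submult Cpos bound] by blast
  fix n :: nat assume n2: "n \<ge> 2"
  show "\<bar>dirichlet_inverse f n\<bar> \<le> real (ord_factorizations n) * C ^ bigOmega n * real n powr \<gamma>"
    using finv_bound[OF f1 fb Cpos, of n] n2 ord_fact_FS[OF n2] by simp
  have "real (ord_factorizations n) \<le> real n powr zeta_rho"
    using H_bound[of zeta_rho n] rho n2 ord_fact_FS[OF n2] by simp
  hence "real (ord_factorizations n) * (C ^ bigOmega n * real n powr \<gamma>)
        \<le> real n powr zeta_rho * (C ^ bigOmega n * real n powr \<gamma>)"
    by (rule mult_right_mono) (use Cpos in simp)
  thus "real (ord_factorizations n) * C ^ bigOmega n * real n powr \<gamma>
        \<le> C ^ bigOmega n * real n powr (\<gamma> + zeta_rho)"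
    by (simp add: powr_add algebra_simps)
qed

end
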